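(* For every $n\ge1$, if $A(T^{mb}_n)$ denotes the number of automorphisms of $T^{mb}_n$, then $c_n=n-1-\log_2 A(T^{mb}_n)$.
   Context: Bifurcating trees: rooted trees in which every internal node has exactly two children; $\mathcal{T}_n$ is the set of isomorphism classes of bifurcating trees with $n$ leaves. For a node $w$, $\kappa_T(w)$ is its number of descendant leaves. The Colless index is $\mathcal{C}(T)=\sum_{v}|\kappa_T(v_1)-\kappa_T(v_2)|$, summed over internal nodes $v$ with children $v_1,v_2$; $c_n=\min\{\mathcal{C}(T):T\in\mathcal{T}_n\}$. $T^{mb}_n$ is the unique bifurcating tree with $n$ leaves in which, at every internal node, the numbers of descendant leaves of the two children differ by at most 1. Automorphisms are automorphisms of the rooted tree (as a directed graph). *)

theory Defs
  imports Complex_Main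
begin

text \<open>Bifurcating (rooted binary) trees. A tree value represents a rooted tree;
isomorphism classes correspond to trees modulo swapping children.\<close>
datatype btree = Leaf | Node btree btree

fun leaves :: "btree \<Rightarrow> nat" where
  "leaves Leaf = 1"
| "leaves (Node l r) = leaves l + leaves r"

fun colless :: "btree \<Rightarrow> nat" where
  "colless Leaf = 0"
| "colless (Node l r) = colless l + colless r +
     (if leaves l \<ge> leaves r then leaves l - leaves r else leaves r - leaves l)"

definition c :: "nat \<Rightarrow> nat" where
  "c n = Min {colless T | T. leaves T = n}"

fun max_balanced :: "btree \<Rightarrow> bool" where
  "max_balanced Leaf = True"
| "max_balanced (Node l r) = (max_balanced l \<and> max_balanced r \<and>
     leaves l \<le> leaves r + 1 \<and> leaves r \<le> leaves l + 1)"

fun nodes :: "btree \<Rightarrow> bool list set" where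
  "nodes Leaf = {[]}"
| "nodes (Node l r) = insert [] ((\<lambda>p. False # p) ` nodes l \<union> (\<lambda>p. True # p) ` nodes r)"

definition edge :: "btree \<Rightarrow> bool list \<Rightarrow> bool list \<Rightarrow> bool" where
  "edge T p q \<longleftrightarrow> p \<in> nodes T \<and> q \<in> nodes T \<and> (\<exists>b. q = p @ [b])"

definition automorphisms :: "btree \<Rightarrow> (bool list \<Rightarrow> bool list) set" where
  "automorphisms T = {f. bij_betw f (nodes T) (nodes T) \<and>
      (\<forall>x. x \<notin> nodes T \<longrightarrow> f x = x) \<and>
      (\<forall>p\<in>nodes T. \<forall>q\<in>nodes T. edge T p q \<longleftrightarrow> edge T (f p) (f q))}"

end

theory Submission
  imports Defs
begin


function F :: "nat \<Rightarrow> nat" where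
  "F n = (if n \<le> 1 then 0 else F (n div 2) + F (n - n div 2) + n mod 2)"
  by auto
termination by (relation "measure id") auto
declare F.simps[simp del]

function sg :: "nat \<Rightarrow> nat" where
  "sg n = (if n \<le> 1 then 0 else sg (n div 2) + sg (n - n div 2) + (if even n then 1 else 0))"
  by auto
termination by (relation "measure id") auto
declare sg.simps[simp del]

lemma F0: "F 0 = 0" by (simp add: F.simps)
lemma F1: "F 1 = 0" by (simp add: F.simps)
lemma F1': "F (Suc 0) = 0" by (simp add: F.simps)
declare F0[simp] F1[simp] F1'[simp]
lemma F_even: "F (2*m) = 2 * F m"
proof (cases "m \<le> 1")
  case True then show ?thesis by (cases m) (auto simp: F.simps)
next
  case False then show ?thesis by (subst F.simps) simp
qed
lemma F_odd: "m \<ge> 1 \<Longrightarrow> F (2*m+1) = F m + F (m+1) + 1"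
  by (subst F.simps) simp

lemma F_sub: "int (F (a+b)) \<le> int (F a) + int (F b) + \<bar>int a - int b\<bar>"
proof (induction "a+b" arbitrary: a b rule: less_induct)
  case less
  show ?case
  proof (cases "a = 0 \<or> b = 0")
    case True then show ?thesis by (auto simp: F0)
  next
    case False
    hence a1: "a \<ge> 1" and b1: "b \<ge> 1" by auto
    obtain p where pa: "a = 2*p \<or> a = 2*p+1" by (metis odd_two_times_div_two_succ dvd_mult_div_cancel)
    obtain q where qb: "b = 2*q \<or> b = 2*q+1" by (metis odd_two_times_div_two_succ dvd_mult_div_cancel)
    show ?thesis
    proof (cases "a = 2*p")
      case ae: True
      hence p1: "p \<ge> 1" using a1 by auto
      show ?thesis
      proof (cases "b = 2*q")
        case be: True
        hence "q \<ge> 1" using b1 by auto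
        have ih: "int (F (p+q)) \<le> int (F p) + int (F q) + \<bar>int p - int q\<bar>"
          using less(1)[of p q] ae be p1 by simp
        have "a + b = 2*(p+q)" using ae be by simp
        then show ?thesis using ih ae be F_even[of "p+q"] F_even[of p] F_even[of q] by simp
      next
        case bo: False
        hence be: "b = 2*q+1" using qb by auto
        have n: "a + b = 2*(p+q)+1" using ae be by simp
        have Fn: "F (a+b) = F (p+q) + F (p+q+1) + 1" using n F_odd[of "p+q"] p1 by simp
        show ?thesis
        proof (cases "q = 0")
          case True
          have ih: "int (F (p+1)) \<le> int (F p) + int (F 1) + \<bar>int p - int 1\<bar>"
            using less(1)[of p 1] ae p1 True be by simp
          show ?thesis using ih Fn True be ae F_even[of p] F1 p1 by simp
        next
          case False
          have ih1: "int (F (p+q)) \<le> int (F p) + int (F q) + \<bar>int p - int q\<bar>"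
            using less(1)[of p q] ae be p1 by simp
          have ih2: "int (F (p+(q+1))) \<le> int (F p) + int (F (q+1)) + \<bar>int p - int (q+1)\<bar>"
            using less(1)[of p "q+1"] ae be p1 False by simp
          have Fb: "F b = F q + F (q+1) + 1" using be F_odd[of q] False by simp
          show ?thesis using ih1 ih2 Fn Fb ae be F_even[of p] by (auto simp: abs_if split: if_splits)
        qed
      qed
    next
      case ao: False
      hence ae: "a = 2*p+1" using pa by auto
      show ?thesis
      proof (cases "b = 2*q")
        case be: True
        hence q1: "q \<ge> 1" using b1 by auto
        have n: "a + b = 2*(p+q)+1" using ae be by simp
        have Fn: "F (a+b) = F (p+q) + F (p+q+1) + 1" using n F_odd[of "p+q"] q1 by simp
        show ?thesis
        proof (cases "p = 0")
          case True
          have ih: "int (F (1+q)) \<le> int (F 1) + int (F q) + \<bar>int 1 - int q\<bar>"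
            using less(1)[of 1 q] be q1 ae True by simp
          show ?thesis using ih Fn True be ae F_even[of q] F1 q1 by (simp add: add.commute)
        next
          case False
          have ih1: "int (F (p+q)) \<le> int (F p) + int (F q) + \<bar>int p - int q\<bar>"
            using less(1)[of p q] ae be q1 by simp
          have ih2: "int (F ((p+1)+q)) \<le> int (F (p+1)) + int (F q) + \<bar>int (p+1) - int q\<bar>"
            using less(1)[of "p+1" q] ae be q1 False by simp
          have Fa: "F a = F p + F (p+1) + 1" using ae F_odd[of p] False by simp
          show ?thesis using ih1 ih2 Fn Fa ae be F_even[of q] by (auto simp: abs_if split: if_splits)
        qed
      next
        case bo: False
        hence be: "b = 2*q+1" using qb by auto
        have n: "a + b = 2*(p+q+1)" using ae be by simp
        have Fn: "F (a+b) = 2 * F (p+q+1)" using n F_even[of "p+q+1"] by (simp only:)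
        show ?thesis
        proof (cases "p = 0 \<or> q = 0")
          case True
          show ?thesis
          proof (cases "p = 0")
            case p0: True
            show ?thesis
            proof (cases "q = 0")
              case True thus ?thesis using p0 ae be by (simp add: F.simps)
            next
              case False
              have ih: "int (F (q+1)) \<le> int (F q) + int (F 1) + \<bar>int q - int 1\<bar>"
                using less(1)[of q 1] ae be p0 False by simp
              have Fb: "F b = F q + F (q+1) + 1" using be F_odd[of q] False by simp
              show ?thesis using ih Fn Fb p0 ae be F1 False by (auto simp: abs_if split: if_splits)
            qed
          next
            case False
            hence q0: "q = 0" "p \<ge> 1" using True by auto
            have ih: "int (F (p+1)) \<le> int (F p) + int (F 1) + \<bar>int p - int 1\<bar>"
              using less(1)[of p 1] ae be q0 by simp
            have Fa: "F a = F p + F (p+1) + 1" using ae F_odd[of p] q0 by simp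
            show ?thesis using ih Fn Fa q0 ae be F1 by (auto simp: abs_if split: if_splits)
          qed
        next
          case False
          have ih1: "int (F ((p+1)+q)) \<le> int (F (p+1)) + int (F q) + \<bar>int (p+1) - int q\<bar>"
            using less(1)[of "p+1" q] ae be False by simp
          have ih2: "int (F (p+(q+1))) \<le> int (F p) + int (F (q+1)) + \<bar>int p - int (q+1)\<bar>"
            using less(1)[of p "q+1"] ae be False by simp
          have Fa: "F a = F p + F (p+1) + 1" using ae F_odd[of p] False by simp
          have Fb: "F b = F q + F (q+1) + 1" using be F_odd[of q] False by simp
          show ?thesis using ih1 ih2 Fn Fa Fb ae be by (auto simp: abs_if split: if_splits)
        qed
      qed
    qed
  qed
qed

lemma F_sg: "n \<ge> 1 \<Longrightarrow> F n + sg n + 1 = n"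
proof (induction n rule: less_induct)
  case (less n)
  show ?case
  proof (cases "n \<le> 1")
    case True thus ?thesis using less by (simp add: F.simps sg.simps)
  next
    case False
    have a: "F (n div 2) + sg (n div 2) + 1 = n div 2" using less False by simp
    have b: "F (n - n div 2) + sg (n - n div 2) + 1 = n - n div 2" using less False by simp
    have "F n = F (n div 2) + F (n - n div 2) + n mod 2" using False by (subst F.simps) simp
    moreover have "sg n = sg (n div 2) + sg (n - n div 2) + (if even n then 1 else 0)"
      using False by (subst sg.simps) simp
    moreover have e: "n mod 2 + (if even n then 1 else 0) = (1::nat)" by (auto simp: odd_iff_mod_2_eq_one)
    moreover have "n div 2 \<le> n" by simp
    ultimately show ?thesis using a b by linarith
  qed
qed

lemma leaves_pos: "leaves T \<ge> 1" by (induction T) auto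

lemma colless_ge: "F (leaves T) \<le> colless T"
proof (induction T)
  case Leaf then show ?case by (simp add: F1)
next
  case (Node l r)
  have "int (F (leaves l + leaves r)) \<le> int (F (leaves l)) + int (F (leaves r)) + \<bar>int (leaves l) - int (leaves r)\<bar>"
    by (rule F_sub)
  then show ?case using Node by (auto split: if_splits)
qed

lemma colless_mb: "max_balanced T \<Longrightarrow> colless T = F (leaves T)"
proof (induction T)
  case Leaf then show ?case by (simp add: F1)
next
  case (Node l r)
  let ?a = "leaves l" and ?b = "leaves r"
  have ab: "?a \<le> ?b + 1" "?b \<le> ?a + 1" using Node by auto
  have n2: "\<not> ?a + ?b \<le> 1" using leaves_pos[of l] leaves_pos[of r] by simp
  have Fn: "F (?a + ?b) = F ((?a+?b) div 2) + F ((?a+?b) - (?a+?b) div 2) + (?a+?b) mod 2"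
    using n2 by (subst F.simps) simp
  show ?case
  proof (cases "?a \<le> ?b")
    case True
    hence "(?a+?b) div 2 = ?a" "(?a+?b) - (?a+?b) div 2 = ?b" "(?a+?b) mod 2 = ?b - ?a" using ab by presburger+
    then show ?thesis using Node Fn True by auto
  next
    case False
    hence "(?a+?b) div 2 = ?b" "(?a+?b) - (?a+?b) div 2 = ?a" "(?a+?b) mod 2 = ?a - ?b" using ab by presburger+
    then show ?thesis using Node Fn False by auto
  qed
qed

lemma colless_le: "colless T \<le> leaves T * leaves T"
proof (induction T)
  case Leaf then show ?case by simp
next
  case (Node l r)
  let ?a = "leaves l" and ?b = "leaves r"
  have "?a \<ge> 1" "?b \<ge> 1" using leaves_pos by auto
  hence "?a \<le> ?a * ?b" "?b \<le> ?a * ?b" by simp_all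
  hence "(if ?a \<ge> ?b then ?a - ?b else ?b - ?a) \<le> 2 * (?a * ?b)" by (simp split: if_split, linarith)
  moreover have "(?a + ?b) * (?a + ?b) = ?a * ?a + ?b * ?b + 2 * (?a * ?b)" by algebra
  ultimately show ?case using Node by simp
qed

lemma c_eq: assumes "leaves T = n" "max_balanced T" shows "c n = F n"
proof -
  let ?S = "{colless T | T. leaves T = n}"
  have fin: "finite ?S"
    by (rule finite_subset[of _ "{..n*n}"]) (auto intro: order.trans[OF colless_le])
  have "colless T = F n" using assms colless_mb by simp
  hence "F n \<in> ?S" using assms(1) unfolding mem_Collect_eq by (intro exI[of _ T]) simp
  moreover have "\<forall>x\<in>?S. F n \<le> x" using colless_ge by auto
  ultimately show ?thesis unfolding c_def using fin by (intro Min_eqI) auto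
qed



definition mor :: "btree \<Rightarrow> btree \<Rightarrow> (bool list \<Rightarrow> bool list) set" where
  "mor T S = {f. bij_betw f (nodes T) (nodes S) \<and> (\<forall>x. x \<notin> nodes T \<longrightarrow> f x = x) \<and>
     (\<forall>p\<in>nodes T. \<forall>q\<in>nodes T. (\<exists>b. q = p @ [b]) \<longleftrightarrow> (\<exists>b. f q = f p @ [b]))}"

lemma edge_iff: "bij_betw f (nodes T) (nodes T) \<Longrightarrow>
     (\<forall>p\<in>nodes T. \<forall>q\<in>nodes T. edge T p q \<longleftrightarrow> edge T (f p) (f q)) \<longleftrightarrow>
     (\<forall>p\<in>nodes T. \<forall>q\<in>nodes T. (\<exists>b. q = p @ [b]) \<longleftrightarrow> (\<exists>b. f q = f p @ [b]))"
proof -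
  assume b: "bij_betw f (nodes T) (nodes T)"
  have fi: "\<And>p. p \<in> nodes T \<Longrightarrow> f p \<in> nodes T" by (rule bij_betw_apply[OF b])
  have "\<And>p q. p \<in> nodes T \<Longrightarrow> q \<in> nodes T \<Longrightarrow> (edge T p q \<longleftrightarrow> edge T (f p) (f q)) = ((\<exists>b. q = p @ [b]) \<longleftrightarrow> (\<exists>b. f q = f p @ [b]))"
    unfolding edge_def using fi by simp
  then show ?thesis by (simp cong: ball_cong)
qed

lemma aut_mor: "automorphisms T = mor T T"
  unfolding automorphisms_def mor_def using edge_iff by blast

lemma nil_nodes[simp]: "[] \<in> nodes T" by (cases T) auto

lemma nodes_prefix: "p @ q \<in> nodes T \<Longrightarrow> p \<in> nodes T"
proof (induction T arbitrary: p)
  case Leaf then show ?case by simp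
next
  case (Node l r)
  show ?case
  proof (cases p)
    case Nil then show ?thesis by simp
  next
    case (Cons b p')
    have m: "b # (p' @ q) \<in> nodes (Node l r)" using Node.prems Cons by simp
    show ?thesis
    proof (cases b)
      case True
      hence "p' @ q \<in> nodes r" using m by auto
      hence "p' \<in> nodes r" by (rule Node.IH(2))
      then show ?thesis using Cons True by simp
    next
      case False
      hence "p' @ q \<in> nodes l" using m by auto
      hence "p' \<in> nodes l" by (rule Node.IH(1))
      then show ?thesis using Cons False by simp
    qed
  qed
qed

fun ch :: "btree \<Rightarrow> bool \<Rightarrow> btree" where
  "ch Leaf b = Leaf"
| "ch (Node l r) b = (if b then r else l)"

lemma nodes_Cons: "T \<noteq> Leaf \<Longrightarrow> (cc # p \<in> nodes T) = (p \<in> nodes (ch T cc))"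
  by (cases T) auto

lemma morD:
  assumes "f \<in> mor T S"
  shows "bij_betw f (nodes T) (nodes S)" "\<And>x. x \<notin> nodes T \<Longrightarrow> f x = x"
    "\<And>p q. p \<in> nodes T \<Longrightarrow> q \<in> nodes T \<Longrightarrow> (\<exists>b. q = p @ [b]) \<longleftrightarrow> (\<exists>b. f q = f p @ [b])"
  using assms unfolding mor_def by auto

lemma mor_root: assumes "f \<in> mor T S" shows "f [] = []"
proof (rule ccontr)
  assume ne: "f [] \<noteq> []"
  note D = morD[OF assms]
  have fn: "f [] \<in> nodes S" by (rule bij_betw_apply[OF D(1) nil_nodes])
  have eq: "f [] = butlast (f []) @ [last (f [])]" using ne by (rule append_butlast_last_id[symmetric])
  have "butlast (f []) @ [last (f [])] \<in> nodes S" using fn by (subst eq[symmetric])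
  hence "butlast (f []) \<in> nodes S" by (rule nodes_prefix)
  moreover have "f ` nodes T = nodes S" using D(1) by (rule bij_betw_imp_surj_on)
  ultimately have "butlast (f []) \<in> f ` nodes T" by simp
  then obtain x where x: "x \<in> nodes T" "f x = butlast (f [])" by (metis imageE)
  have "f [] = f x @ [last (f [])]" unfolding x(2) by (rule eq)
  hence "\<exists>b. f [] = f x @ [b]" by blast
  hence "\<exists>b. [] = x @ [b]" using D(3)[OF x(1) nil_nodes] by blast
  thus False by simp
qed

lemma mor_step: assumes "f \<in> mor T S" "p @ [b] \<in> nodes T" shows "\<exists>b'. f (p @ [b]) = f p @ [b']"
  using morD(3)[OF assms(1) nodes_prefix[OF assms(2)] assms(2)] by blast

lemma mor_nil_iff: assumes "f \<in> mor T S" "p \<in> nodes T" shows "(f p = []) = (p = [])"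
proof -
  have inj: "inj_on f (nodes T)" using morD(1)[OF assms(1)] by (rule bij_betw_imp_inj_on)
  have r: "f [] = []" by (rule mor_root[OF assms(1)])
  show ?thesis
  proof
    assume "f p = []"
    hence "f p = f []" using r by simp
    thus "p = []" using inj_onD[OF inj _ assms(2) nil_nodes] by blast
  qed (simp add: r)
qed

lemma mor_Cons: assumes "f \<in> mor T S" "cc # p \<in> nodes T" shows "\<exists>q. f (cc # p) = f [cc] @ q"
  using assms(2)
proof (induction p rule: rev_induct)
  case Nil then show ?case by simp
next
  case (snoc b p)
  have "cc # p \<in> nodes T" using snoc.prems nodes_prefix[of "cc # p" "[b]"] by simp
  then obtain q where q: "f (cc # p) = f [cc] @ q" using snoc.IH by blast
  have "(cc # p) @ [b] \<in> nodes T" using snoc.prems by simp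
  then obtain b' where "f ((cc # p) @ [b]) = f (cc # p) @ [b']" using mor_step[OF assms(1)] by blast
  thus ?case using q by auto
qed

lemma mor_single: assumes "f \<in> mor T S" "[cc] \<in> nodes T" shows "\<exists>b. f [cc] = [b]"
  using mor_step[OF assms(1), of "[]" cc] assms(2) mor_root[OF assms(1)] by auto

definition dec :: "btree \<Rightarrow> (bool list \<Rightarrow> bool list) \<Rightarrow> bool \<Rightarrow> bool list \<Rightarrow> bool list" where
  "dec T f cc p = (if p \<in> nodes (ch T cc) then tl (f (cc # p)) else p)"

definition comb :: "btree \<Rightarrow> bool \<Rightarrow> (bool list \<Rightarrow> bool list) \<Rightarrow> (bool list \<Rightarrow> bool list) \<Rightarrow> bool list \<Rightarrow> bool list" where
  "comb T \<beta> g0 g1 x = (case x of [] \<Rightarrow> [] | cc # p \<Rightarrow>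
     if p \<in> nodes (ch T cc) then (cc \<noteq> \<beta>) # (if cc then g1 p else g0 p) else x)"

definition A :: "btree \<Rightarrow> btree \<Rightarrow> bool \<Rightarrow> (bool list \<Rightarrow> bool list) set" where
  "A T S \<beta> = {f \<in> mor T S. f [False] = [\<beta>]}"

context
  fixes T S :: btree
  assumes TN: "T \<noteq> Leaf" and SN: "S \<noteq> Leaf"
begin

lemma A_first: assumes "f \<in> A T S \<beta>" shows "f [cc] = [cc \<noteq> \<beta>]"
proof -
  have fm: "f \<in> mor T S" and f0: "f [False] = [\<beta>]" using assms by (auto simp: A_def)
  show ?thesis
  proof (cases cc)
    case False then show ?thesis using f0 by simp
  next
    case True
    have tn: "[True] \<in> nodes T" "[False] \<in> nodes T" using TN by (auto simp: nodes_Cons)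
    obtain b where b: "f [True] = [b]" using mor_single[OF fm tn(1)] by blast
    have "inj_on f (nodes T)" using morD(1)[OF fm] by (simp add: bij_betw_def)
    hence "f [True] \<noteq> f [False]" using tn by (metis inj_on_def list.inject)
    then show ?thesis using b f0 True by auto
  qed
qed

lemma A_Cons: assumes "f \<in> A T S \<beta>" "p \<in> nodes (ch T cc)" shows "f (cc # p) = (cc \<noteq> \<beta>) # dec T f cc p"
proof -
  have fm: "f \<in> mor T S" using assms by (auto simp: A_def)
  have "cc # p \<in> nodes T" using assms(2) TN by (simp add: nodes_Cons)
  then obtain q where "f (cc # p) = f [cc] @ q" using mor_Cons[OF fm] by blast
  thus ?thesis using A_first[OF assms(1)] assms(2) by (simp add: dec_def)
qed

lemma dec_mor: assumes "f \<in> A T S \<beta>" shows "dec T f cc \<in> mor (ch T cc) (ch S (cc \<noteq> \<beta>))"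
proof -
  have fm: "f \<in> mor T S" using assms by (auto simp: A_def)
  note D = morD[OF fm]
  have inj: "inj_on f (nodes T)" and img: "f ` nodes T = nodes S" using D(1) by (auto simp: bij_betw_def)
  have fC: "\<And>p. p \<in> nodes (ch T cc) \<Longrightarrow> f (cc # p) = (cc \<noteq> \<beta>) # dec T f cc p" using A_Cons[OF assms] by blast
  have inj2: "inj_on (dec T f cc) (nodes (ch T cc))"
  proof (rule inj_onI)
    fix p q assume p: "p \<in> nodes (ch T cc)" and q: "q \<in> nodes (ch T cc)" and e: "dec T f cc p = dec T f cc q"
    have "f (cc # p) = f (cc # q)" using fC[OF p] fC[OF q] e by simp
    moreover have "cc # p \<in> nodes T" "cc # q \<in> nodes T" using p q TN by (auto simp: nodes_Cons)
    ultimately show "p = q" using inj by (auto dest: inj_onD)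
  qed
  have img2: "dec T f cc ` nodes (ch T cc) = nodes (ch S (cc \<noteq> \<beta>))"
  proof
    show "dec T f cc ` nodes (ch T cc) \<subseteq> nodes (ch S (cc \<noteq> \<beta>))"
    proof
      fix y assume "y \<in> dec T f cc ` nodes (ch T cc)"
      then obtain p where p: "p \<in> nodes (ch T cc)" "y = dec T f cc p" by blast
      have "cc # p \<in> nodes T" using p TN by (auto simp: nodes_Cons)
      hence "f (cc # p) \<in> nodes S" using img by blast
      thus "y \<in> nodes (ch S (cc \<noteq> \<beta>))" using fC[OF p(1)] p(2) SN by (simp add: nodes_Cons)
    qed
  next
    show "nodes (ch S (cc \<noteq> \<beta>)) \<subseteq> dec T f cc ` nodes (ch T cc)"
    proof
      fix q assume q: "q \<in> nodes (ch S (cc \<noteq> \<beta>))"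
      hence "(cc \<noteq> \<beta>) # q \<in> nodes S" using SN by (simp add: nodes_Cons)
      then obtain x where x: "x \<in> nodes T" "f x = (cc \<noteq> \<beta>) # q" using img by (metis imageE)
      have "x \<noteq> []" using x mor_root[OF fm] by auto
      then obtain cc' p where xc: "x = cc' # p" by (cases x) auto
      have p: "p \<in> nodes (ch T cc')" using x(1) xc TN by (simp add: nodes_Cons)
      have "(cc' \<noteq> \<beta>) # dec T f cc' p = (cc \<noteq> \<beta>) # q" using A_Cons[OF assms p] x(2) xc by simp
      hence "cc' = cc" "dec T f cc' p = q" by auto
      thus "q \<in> dec T f cc ` nodes (ch T cc)" using p by blast
    qed
  qed
  have E: "\<forall>p\<in>nodes (ch T cc). \<forall>q\<in>nodes (ch T cc). (\<exists>b. q = p @ [b]) \<longleftrightarrow> (\<exists>b. dec T f cc q = dec T f cc p @ [b])"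
  proof (intro ballI)
    fix p q assume p: "p \<in> nodes (ch T cc)" and q: "q \<in> nodes (ch T cc)"
    have pc: "cc # p \<in> nodes T" "cc # q \<in> nodes T" using p q TN by (auto simp: nodes_Cons)
    have "(\<exists>b. q = p @ [b]) \<longleftrightarrow> (\<exists>b. cc # q = (cc # p) @ [b])" by simp
    also have "\<dots> \<longleftrightarrow> (\<exists>b. f (cc # q) = f (cc # p) @ [b])" using D(3)[OF pc] .
    also have "\<dots> \<longleftrightarrow> (\<exists>b. dec T f cc q = dec T f cc p @ [b])" using fC[OF p] fC[OF q] by simp
    finally show "(\<exists>b. q = p @ [b]) \<longleftrightarrow> (\<exists>b. dec T f cc q = dec T f cc p @ [b])" .
  qed
  have out: "\<forall>x. x \<notin> nodes (ch T cc) \<longrightarrow> dec T f cc x = x" by (simp add: dec_def)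
  show ?thesis unfolding mor_def bij_betw_def mem_Collect_eq by (intro conjI inj2 img2 out E)
qed

lemma comb_A:
  assumes g0: "g0 \<in> mor (ch T False) (ch S \<beta>)" and g1: "g1 \<in> mor (ch T True) (ch S (\<not> \<beta>))"
  shows "comb T \<beta> g0 g1 \<in> A T S \<beta>"
proof -
  define G where "G cc = (if cc then g1 else g0)" for cc
  have G: "\<And>cc. G cc \<in> mor (ch T cc) (ch S (cc \<noteq> \<beta>))" using g0 g1 by (simp add: G_def)
  have cb: "\<And>x. comb T \<beta> g0 g1 x = (case x of [] \<Rightarrow> [] | cc # p \<Rightarrow>
     if p \<in> nodes (ch T cc) then (cc \<noteq> \<beta>) # G cc p else x)" by (simp add: comb_def G_def split: list.split)
  let ?f = "comb T \<beta> g0 g1"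
  have fC: "\<And>cc p. p \<in> nodes (ch T cc) \<Longrightarrow> ?f (cc # p) = (cc \<noteq> \<beta>) # G cc p" using cb by simp
  have f0: "?f [] = []" using cb by simp
  have Gin: "\<And>cc p. p \<in> nodes (ch T cc) \<Longrightarrow> G cc p \<in> nodes (ch S (cc \<noteq> \<beta>))"
    by (rule bij_betw_apply[OF morD(1)[OF G]])
  have Ginj: "\<And>cc. inj_on (G cc) (nodes (ch T cc))" using morD(1)[OF G] by (rule bij_betw_imp_inj_on)
  have Gimg: "\<And>cc. G cc ` nodes (ch T cc) = nodes (ch S (cc \<noteq> \<beta>))" using morD(1)[OF G] by (rule bij_betw_imp_surj_on)
  have out: "\<forall>x. x \<notin> nodes T \<longrightarrow> ?f x = x"
  proof (intro allI impI)
    fix x assume "x \<notin> nodes T"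
    then show "?f x = x" using TN by (cases x) (auto simp: cb nodes_Cons)
  qed
  have inj: "inj_on ?f (nodes T)"
  proof (rule inj_onI)
    fix x y assume x: "x \<in> nodes T" and y: "y \<in> nodes T" and e: "?f x = ?f y"
    show "x = y"
    proof (cases x)
      case Nil
      then show ?thesis using e y TN f0 by (cases y) (auto simp: nodes_Cons fC)
    next
      case (Cons cc p)
      hence p: "p \<in> nodes (ch T cc)" using x TN by (simp add: nodes_Cons)
      show ?thesis
      proof (cases y)
        case Nil then show ?thesis using e Cons fC[OF p] f0 by simp
      next
        case (Cons d q)
        hence q: "q \<in> nodes (ch T d)" using y TN by (simp add: nodes_Cons)
        have "(cc \<noteq> \<beta>) # G cc p = (d \<noteq> \<beta>) # G d q" using e fC[OF p] fC[OF q] \<open>x = cc # p\<close> Cons by simp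
        hence h: "(cc \<noteq> \<beta>) = (d \<noteq> \<beta>)" "G cc p = G d q" by simp_all
        hence cd: "cc = d" by auto
        hence "G cc p = G cc q" using h by simp
        hence "p = q" using Ginj[of cc] p q cd by (auto dest: inj_onD)
        thus ?thesis using cd Cons \<open>x = cc # p\<close> by simp
      qed
    qed
  qed
  have img: "?f ` nodes T = nodes S"
  proof
    show "?f ` nodes T \<subseteq> nodes S"
    proof
      fix y assume "y \<in> ?f ` nodes T"
      then obtain x where x: "x \<in> nodes T" "y = ?f x" by blast
      show "y \<in> nodes S"
      proof (cases x)
        case Nil then show ?thesis using x f0 by simp
      next
        case (Cons cc p)
        hence p: "p \<in> nodes (ch T cc)" using x TN by (simp add: nodes_Cons)
        show ?thesis using x Cons fC[OF p] Gin[OF p] SN by (simp add: nodes_Cons)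
      qed
    qed
  next
    show "nodes S \<subseteq> ?f ` nodes T"
    proof
      fix y assume y: "y \<in> nodes S"
      show "y \<in> ?f ` nodes T"
      proof (cases y)
        case Nil then show ?thesis using f0 by (metis image_eqI nil_nodes)
      next
        case (Cons d q)
        define cc where "cc = (d \<noteq> \<beta>)"
        have dc: "d = (cc \<noteq> \<beta>)" by (auto simp: cc_def)
        have "q \<in> nodes (ch S (cc \<noteq> \<beta>))" using y Cons SN dc by (simp add: nodes_Cons)
        then obtain p where p: "p \<in> nodes (ch T cc)" "G cc p = q" using Gimg[of cc] by (metis imageE)
        have "cc # p \<in> nodes T" using p TN by (simp add: nodes_Cons)
        moreover have "?f (cc # p) = y" using fC[OF p(1)] p(2) Cons dc by simp
        ultimately show ?thesis by (metis image_eqI)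
      qed
    qed
  qed
  have E: "\<forall>p\<in>nodes T. \<forall>q\<in>nodes T. (\<exists>b. q = p @ [b]) \<longleftrightarrow> (\<exists>b. ?f q = ?f p @ [b])"
  proof (intro ballI)
    fix x y assume x: "x \<in> nodes T" and y: "y \<in> nodes T"
    show "(\<exists>b. y = x @ [b]) \<longleftrightarrow> (\<exists>b. ?f y = ?f x @ [b])"
    proof (cases x)
      case Nil
      show ?thesis
      proof (cases y)
        case Nil then show ?thesis using \<open>x = []\<close> f0 by simp
      next
        case (Cons d q)
        hence q: "q \<in> nodes (ch T d)" using y TN by (simp add: nodes_Cons)
        have "(G d q = []) = (q = [])" using mor_nil_iff[OF G q] .
        then show ?thesis using \<open>x = []\<close> Cons fC[OF q] f0 by auto
      qed
    next
      case (Cons cc p)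
      hence p: "p \<in> nodes (ch T cc)" using x TN by (simp add: nodes_Cons)
      show ?thesis
      proof (cases y)
        case Nil then show ?thesis using Cons fC[OF p] f0 by simp
      next
        case yc: (Cons d q)
        hence q: "q \<in> nodes (ch T d)" using y TN by (simp add: nodes_Cons)
        show ?thesis
        proof (cases "cc = d")
          case True
          have "(\<exists>b. q = p @ [b]) \<longleftrightarrow> (\<exists>b. G cc q = G cc p @ [b])"
            using morD(3)[OF G p] q True by simp
          then show ?thesis using Cons yc fC[OF p] fC[OF q] True by simp
        next
          case False
          then show ?thesis using Cons yc fC[OF p] fC[OF q] by auto
        qed
      qed
    qed
  qed
  have "G False [] = []" using mor_root[OF G[of False]] .
  hence "?f [False] = [\<beta>]" using fC[of "[]" False] by simp
  moreover have "?f \<in> mor T S" unfolding mor_def bij_betw_def mem_Collect_eq by (intro conjI inj img out E)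
  ultimately show ?thesis unfolding A_def by blast
qed

lemma comb_dec: assumes "f \<in> A T S \<beta>" shows "comb T \<beta> (dec T f False) (dec T f True) = f"
proof
  fix x
  have fm: "f \<in> mor T S" using assms by (auto simp: A_def)
  show "comb T \<beta> (dec T f False) (dec T f True) x = f x"
  proof (cases x)
    case Nil then show ?thesis using mor_root[OF fm] by (simp add: comb_def)
  next
    case (Cons cc p)
    show ?thesis
    proof (cases "p \<in> nodes (ch T cc)")
      case True then show ?thesis using A_Cons[OF assms True] Cons by (cases cc) (auto simp: comb_def)
    next
      case False
      hence "x \<notin> nodes T" using Cons TN by (simp add: nodes_Cons)
      then show ?thesis using morD(2)[OF fm] False Cons by (simp add: comb_def)
    qed
  qed
qed

lemma dec_comb:
  assumes g0: "g0 \<in> mor (ch T False) (ch S \<beta>)" and g1: "g1 \<in> mor (ch T True) (ch S (\<not> \<beta>))"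
  shows "dec T (comb T \<beta> g0 g1) cc = (if cc then g1 else g0)"
proof
  fix p
  show "dec T (comb T \<beta> g0 g1) cc p = (if cc then g1 else g0) p"
  proof (cases "p \<in> nodes (ch T cc)")
    case True then show ?thesis by (simp add: dec_def comb_def)
  next
    case False
    then show ?thesis using morD(2)[OF g0] morD(2)[OF g1] by (cases cc) (auto simp: dec_def)
  qed
qed

lemma A_bij: "bij_betw (\<lambda>f. (dec T f False, dec T f True)) (A T S \<beta>)
   (mor (ch T False) (ch S \<beta>) \<times> mor (ch T True) (ch S (\<not> \<beta>)))"
proof (rule bij_betw_byWitness[where f' = "\<lambda>(g0, g1). comb T \<beta> g0 g1"])
  show "\<forall>f\<in>A T S \<beta>. (\<lambda>(g0, g1). comb T \<beta> g0 g1) (dec T f False, dec T f True) = f"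
    using comb_dec by simp
  show "\<forall>g\<in>mor (ch T False) (ch S \<beta>) \<times> mor (ch T True) (ch S (\<not> \<beta>)).
     (\<lambda>f. (dec T f False, dec T f True)) ((\<lambda>(g0, g1). comb T \<beta> g0 g1) g) = g"
    using dec_comb by auto
  show "(\<lambda>f. (dec T f False, dec T f True)) ` A T S \<beta> \<subseteq> mor (ch T False) (ch S \<beta>) \<times> mor (ch T True) (ch S (\<not> \<beta>))"
    using dec_mor[of _ \<beta> False] dec_mor[of _ \<beta> True] by auto
  show "(\<lambda>(g0, g1). comb T \<beta> g0 g1) ` (mor (ch T False) (ch S \<beta>) \<times> mor (ch T True) (ch S (\<not> \<beta>))) \<subseteq> A T S \<beta>"
    using comb_A by auto
qed

lemma mor_split: "mor T S = A T S False \<union> A T S True"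
proof -
  have "[False] \<in> nodes T" using TN by (simp add: nodes_Cons)
  hence "\<And>f. f \<in> mor T S \<Longrightarrow> \<exists>b. f [False] = [b]" using mor_single by blast
  note this
  show ?thesis
  proof
    show "mor T S \<subseteq> A T S False \<union> A T S True"
    proof
      fix f assume f: "f \<in> mor T S"
      then obtain b where "f [False] = [b]" using \<open>\<And>f. f \<in> mor T S \<Longrightarrow> \<exists>b. f [False] = [b]\<close> by blast
      then show "f \<in> A T S False \<union> A T S True" using f unfolding A_def by (cases b) auto
    qed
  qed (auto simp: A_def)
qed

end

fun M :: "btree \<Rightarrow> btree \<Rightarrow> nat" where
  "M Leaf Leaf = 1"
| "M Leaf (Node _ _) = 0"
| "M (Node _ _) Leaf = 0"
| "M (Node l1 r1) (Node l2 r2) = M l1 l2 * M r1 r2 + M l1 r2 * M r1 l2"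

lemma mor_LL: "mor Leaf Leaf = {id}"
proof -
  have "\<And>f. f \<in> mor Leaf Leaf \<Longrightarrow> f = id"
  proof
    fix f x assume f: "f \<in> mor Leaf Leaf"
    show "f x = id x" using mor_root[OF f] morD(2)[OF f, of x] by (cases "x = []") auto
  qed
  moreover have "id \<in> mor Leaf Leaf" by (simp add: mor_def)
  ultimately show ?thesis by blast
qed

lemma mor_LN: "mor Leaf (Node l r) = {}"
proof -
  have "\<And>f. f \<in> mor Leaf (Node l r) \<Longrightarrow> False"
  proof -
    fix f assume f: "f \<in> mor Leaf (Node l r)"
    have e: "f ` nodes Leaf = nodes (Node l r)" using morD(1)[OF f] by (rule bij_betw_imp_surj_on)
    have "[] \<in> nodes (Node l r)" "[False] \<in> nodes (Node l r)" by auto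
    hence "[] \<in> f ` nodes Leaf" "[False] \<in> f ` nodes Leaf" by (simp_all only: e)
    then show False by auto
  qed
  thus ?thesis by blast
qed

lemma mor_NL: "mor (Node l r) Leaf = {}"
proof -
  have "\<And>f. f \<in> mor (Node l r) Leaf \<Longrightarrow> False"
  proof -
    fix f assume f: "f \<in> mor (Node l r) Leaf"
    have b: "bij_betw f (nodes (Node l r)) (nodes Leaf)" using morD(1)[OF f] .
    have m1: "[] \<in> nodes (Node l r)" and m2: "[False] \<in> nodes (Node l r)" by auto
    have "f [] \<in> nodes Leaf" "f [False] \<in> nodes Leaf" by (rule bij_betw_apply[OF b m1], rule bij_betw_apply[OF b m2])
    hence e: "f [] = f [False]" by simp
    have inj: "inj_on f (nodes (Node l r))" using b by (rule bij_betw_imp_inj_on)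
    have "[] = [False]" by (rule inj_onD[OF inj e m1 m2])
    thus False by simp
  qed
  thus ?thesis by blast
qed

lemma card_mor: "finite (mor T S) \<and> card (mor T S) = M T S"
proof (induction T arbitrary: S)
  case Leaf then show ?case by (cases S) (auto simp: mor_LL mor_LN)
next
  case (Node l1 r1)
  show ?case
  proof (cases S)
    case Leaf then show ?thesis by (simp add: mor_NL)
  next
    case (Node l2 r2)
    let ?T = "Node l1 r1" and ?S = "Node l2 r2"
    have b: "\<And>\<beta>. bij_betw (\<lambda>f. (dec ?T f False, dec ?T f True)) (A ?T ?S \<beta>)
      (mor (ch ?T False) (ch ?S \<beta>) \<times> mor (ch ?T True) (ch ?S (\<not> \<beta>)))"
      by (rule A_bij) auto
    have fc: "\<And>\<beta>. finite (A ?T ?S \<beta>) \<and> card (A ?T ?S \<beta>) =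
       card (mor (ch ?T False) (ch ?S \<beta>)) * card (mor (ch ?T True) (ch ?S (\<not> \<beta>)))"
    proof -
      fix \<beta>
      have f1: "finite (mor (ch ?T False) (ch ?S \<beta>))" "finite (mor (ch ?T True) (ch ?S (\<not> \<beta>)))"
        using Node.IH by auto
      show "finite (A ?T ?S \<beta>) \<and> card (A ?T ?S \<beta>) =
       card (mor (ch ?T False) (ch ?S \<beta>)) * card (mor (ch ?T True) (ch ?S (\<not> \<beta>)))"
        using bij_betw_finite[OF b[of \<beta>]] bij_betw_same_card[OF b[of \<beta>]] f1
        by (simp add: card_cartesian_product)
    qed
    have sp: "mor ?T ?S = A ?T ?S False \<union> A ?T ?S True" by (rule mor_split) auto
    have dj: "A ?T ?S False \<inter> A ?T ?S True = {}" by (auto simp: A_def)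
    have "card (mor ?T ?S) = card (A ?T ?S False) + card (A ?T ?S True)"
      unfolding sp using card_Un_disjoint[OF conjunct1[OF fc[of False]] conjunct1[OF fc[of True]] dj] .
    also have "\<dots> = M ?T ?S" using fc[of False] fc[of True] Node.IH by simp
    finally have "card (mor ?T ?S) = M ?T ?S" .
    moreover have "finite (mor ?T ?S)" unfolding sp using fc by blast
    ultimately show ?thesis using Node by simp
  qed
qed



lemma M_zero: "leaves T \<noteq> leaves S \<Longrightarrow> M T S = 0"
proof (induction T arbitrary: S)
  case Leaf then show ?case by (cases S) auto
next
  case (Node l1 r1)
  then show ?case
  proof (cases S)
    case Leaf then show ?thesis by simp
  next
    case (Node l2 r2)
    have a: "M l1 l2 * M r1 r2 = 0"
    proof (cases "leaves l1 = leaves l2")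
      case True
      hence "leaves r1 \<noteq> leaves r2" using Node.prems Node by simp
      then show ?thesis using Node.IH(2) by simp
    next
      case False then show ?thesis using Node.IH(1) by simp
    qed
    have b: "M l1 r2 * M r1 l2 = 0"
    proof (cases "leaves l1 = leaves r2")
      case True
      hence "leaves r1 \<noteq> leaves l2" using Node.prems Node by simp
      then show ?thesis using Node.IH(2) by simp
    next
      case False then show ?thesis using Node.IH(1) by simp
    qed
    show ?thesis using a b Node by simp
  qed
qed

lemma leaves_Leaf: assumes "leaves T = 1" shows "T = Leaf"
proof (cases T)
  case (Node l r)
  then show ?thesis using assms leaves_pos[of l] leaves_pos[of r] by simp
qed simp

lemma bal_split: fixes x y :: nat assumes "x \<le> y+1" "y \<le> x+1"
  shows "(x = (x+y) div 2 \<and> y = (x+y) - (x+y) div 2) \<or> (x = (x+y) - (x+y) div 2 \<and> y = (x+y) div 2)"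
proof -
  have "y = x \<or> y = x + 1 \<or> x = y + 1" using assms by linarith
  then show ?thesis by auto
qed

lemma even_half: "even (m::nat) \<longleftrightarrow> m div 2 = m - m div 2"
  by (cases "even m") (auto elim!: evenE oddE)

lemma M_mb: "max_balanced T \<Longrightarrow> max_balanced S \<Longrightarrow> leaves T = leaves S \<Longrightarrow> M T S = 2 ^ sg (leaves T)"
proof (induction T arbitrary: S)
  case Leaf
  hence "S = Leaf" using leaves_Leaf by simp
  then show ?case by (simp add: sg.simps)
next
  case (Node l1 r1)
  obtain l2 r2 where S: "S = Node l2 r2"
    using Node.prems leaves_pos[of l1] leaves_pos[of r1] by (cases S) auto
  let ?n = "leaves l1 + leaves r1"
  define h where "h = ?n div 2"
  define k where "k = ?n - h"
  have n2: "\<not> ?n \<le> 1" using leaves_pos[of l1] leaves_pos[of r1] by simp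
  have hk: "even ?n = (h = k)" unfolding h_def k_def by (rule even_half)
  have "sg ?n = sg h + sg k + (if even ?n then 1 else 0)"
    unfolding h_def k_def using n2 by (subst sg.simps) simp
  hence sgn: "sg ?n = sg h + sg k + (if h = k then 1 else 0)" using hk by simp
  have mb: "max_balanced l1" "max_balanced r1" "max_balanced l2" "max_balanced r2"
    using Node.prems S by auto
  have ba1: "leaves l1 \<le> leaves r1 + 1" "leaves r1 \<le> leaves l1 + 1" using Node.prems by auto
  have ba2: "leaves l2 \<le> leaves r2 + 1" "leaves r2 \<le> leaves l2 + 1" using Node.prems S by auto
  have sum2: "leaves l2 + leaves r2 = ?n" using Node.prems S by simp
  have c1: "(leaves l1 = h \<and> leaves r1 = k) \<or> (leaves l1 = k \<and> leaves r1 = h)"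
    using bal_split[OF ba1] unfolding h_def k_def .
  have c2: "(leaves l2 = h \<and> leaves r2 = k) \<or> (leaves l2 = k \<and> leaves r2 = h)"
    using bal_split[OF ba2] sum2 unfolding h_def k_def by simp
  have L: "\<And>X. max_balanced X \<Longrightarrow> M l1 X = (if leaves l1 = leaves X then 2 ^ sg (leaves l1) else 0)"
    using Node.IH(1) mb M_zero by auto
  have R: "\<And>X. max_balanced X \<Longrightarrow> M r1 X = (if leaves r1 = leaves X then 2 ^ sg (leaves r1) else 0)"
    using Node.IH(2) mb M_zero by auto
  have "M (Node l1 r1) S = M l1 l2 * M r1 r2 + M l1 r2 * M r1 l2" using S by simp
  also have "\<dots> = 2 ^ sg ?n"
  proof (cases "h = k")
    case True
    hence all: "leaves l1 = h" "leaves r1 = h" "leaves l2 = h" "leaves r2 = h" using c1 c2 by auto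
    have "M l1 l2 = 2 ^ sg h" "M r1 r2 = 2 ^ sg h" "M l1 r2 = 2 ^ sg h" "M r1 l2 = 2 ^ sg h"
      using L[OF mb(3)] L[OF mb(4)] R[OF mb(3)] R[OF mb(4)] all by simp_all
    moreover have "sg ?n = Suc (sg h + sg h)" using sgn True by simp
    ultimately show ?thesis by (simp add: power_add)
  next
    case False
    have sn: "sg ?n = sg h + sg k" using sgn False by simp
    show ?thesis using c1 c2
    proof (elim disjE conjE)
      assume "leaves l1 = h" "leaves r1 = k" "leaves l2 = h" "leaves r2 = k"
      then show ?thesis using L[OF mb(3)] L[OF mb(4)] R[OF mb(3)] R[OF mb(4)] False sn by (simp add: power_add)
    next
      assume "leaves l1 = h" "leaves r1 = k" "leaves l2 = k" "leaves r2 = h"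
      then show ?thesis using L[OF mb(3)] L[OF mb(4)] R[OF mb(3)] R[OF mb(4)] False sn by (simp add: power_add)
    next
      assume "leaves l1 = k" "leaves r1 = h" "leaves l2 = h" "leaves r2 = k"
      then show ?thesis using L[OF mb(3)] L[OF mb(4)] R[OF mb(3)] R[OF mb(4)] False sn by (simp add: power_add mult.commute)
    next
      assume "leaves l1 = k" "leaves r1 = h" "leaves l2 = k" "leaves r2 = h"
      then show ?thesis using L[OF mb(3)] L[OF mb(4)] R[OF mb(3)] R[OF mb(4)] False sn by (simp add: power_add mult.commute)
    qed
  qed
  finally show ?case by simp
qed

theorem corollary2:
  fixes n :: nat and T :: btree
  assumes "n \<ge> 1" and "leaves T = n" and "max_balanced T"
  shows "real (c n) = real n - 1 - log 2 (real (card (automorphisms T)))"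
proof -
  have "card (automorphisms T) = 2 ^ sg n"
    using aut_mor card_mor M_mb[OF assms(3) assms(3)] assms(2) by simp
  hence l: "log 2 (real (card (automorphisms T))) = real (sg n)"
    by (simp add: log_nat_power)
  have "c n = F n" by (rule c_eq[OF assms(2) assms(3)])
  moreover have "F n + sg n + 1 = n" by (rule F_sg[OF assms(1)])
  ultimately show ?thesis using l by simp
qed

end
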